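(* Let $\psi : [0,\infty) \to [0,\infty)$ be a measurable function such that $0 < 1/c_d := \int_0^\infty u^d \psi(u)\,{\rm d}u < \infty$ for all integers $d \ge 1$. For each $d \ge 1$, let $X_d$ be a random vector in $\mathbb{R}^{d+1}$ with density $x \mapsto c_d\,\psi(\|x\|)$, and let $U_d = \|X_d\|$, which has density $u \mapsto c_d u^d \psi(u)$ on $[0,\infty)$. Define $$u_* = \sup\Big\{u : \int_{u-\varepsilon}^u \psi(v)\,{\rm d}v > 0 \text{ for all } \varepsilon > 0\Big\},$$ and assume $u_* < \infty$. Assume in addition that $\psi$ is bounded and that $\psi(u) \sim a (u_* - u)^b$ as $u \nearrow u_*$, for some constants $a > 0$ and $b > -1$. Then $d\,(u_* - U_d)$ converges in distribution, as $d \to \infty$, to the Gamma distribution with shape parameter $b+1$ and rate $1/u_*$.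
   Context: $f(u) \sim g(u)$ as $u \nearrow u_*$ means $f(u)/g(u) \to 1$. The Gamma distribution with shape $k$ and rate $\lambda$ has density proportional to $x^{k-1}e^{-\lambda x}$ on $(0,\infty)$. *)

theory Defs
  imports "HOL-Probability.Probability" "HOL-Library.Landau_Symbols"
begin

text \<open>psi is a function on [0,oo); we represent it as a real function and only
  ever use its values on {0..}.\<close>

definition psi_moment :: "(real \<Rightarrow> real) \<Rightarrow> nat \<Rightarrow> ennreal" where
  "psi_moment \<psi> d = (\<integral>\<^sup>+ u. ennreal (indicator {0..} u * u ^ d * \<psi> u) \<partial>lborel)"

definition c_const :: "(real \<Rightarrow> real) \<Rightarrow> nat \<Rightarrow> real" where
  "c_const \<psi> d = 1 / enn2real (psi_moment \<psi> d)"

definition U_density :: "(real \<Rightarrow> real) \<Rightarrow> nat \<Rightarrow> real \<Rightarrow> real" where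
  "U_density \<psi> d u = indicator {0..} u * c_const \<psi> d * u ^ d * \<psi> u"

definition ustar_set :: "(real \<Rightarrow> real) \<Rightarrow> real set" where
  "ustar_set \<psi> = {u. \<forall>\<epsilon>>0. (\<integral>\<^sup>+ v. ennreal (indicator ({u - \<epsilon>..u} \<inter> {0..}) v * \<psi> v) \<partial>lborel) > 0}"

definition ustar :: "(real \<Rightarrow> real) \<Rightarrow> real" where
  "ustar \<psi> = Sup (ustar_set \<psi>)"

definition gamma_density :: "real \<Rightarrow> real \<Rightarrow> real \<Rightarrow> real" where
  "gamma_density k l x = (if x > 0 then l powr k * x powr (k - 1) * exp (- l * x) / Gamma k else 0)"

definition gamma_measure :: "real \<Rightarrow> real \<Rightarrow> real measure" where
  "gamma_measure k l = density lborel (\<lambda>x. ennreal (gamma_density k l x))"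

end

theory Submission
  imports Defs
begin

lemma zero_beyond:
  fixes p :: "real \<Rightarrow> real" and K :: real and S :: "real set"
  assumes pm[measurable]: "p \<in> borel_measurable borel" and pnn: "\<And>u. p u \<ge> 0" and pK: "\<And>u. p u \<le> K"
    and S: "S = {u. \<forall>\<epsilon>>0. (\<integral>\<^sup>+v. ennreal (indicator {u-\<epsilon>..u} v * p v) \<partial>lborel) > 0}"
    and bdd: "bdd_above S"
  shows "AE u in lborel. Sup S < u \<longrightarrow> p u = 0"
proof -
  define s where "s = Sup S"
  define I where "I a b = (\<integral>\<^sup>+v. ennreal (indicator {a<..b} v * p v) \<partial>lborel)" for a b
  have K0: "K \<ge> 0" using pnn[of 0] pK[of 0] by linarith
  have Ibnd: "I a b \<le> ennreal (K * (b - a))" if "a \<le> b" for a b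
  proof -
    have "I a b \<le> (\<integral>\<^sup>+v. ennreal K * indicator {a<..b} v \<partial>lborel)"
      unfolding I_def by (intro nn_integral_mono) (auto simp: indicator_def pK ennreal_leI)
    also have "\<dots> = ennreal K * ennreal (b - a)"
      using that by (subst nn_integral_cmult_indicator) auto
    also have "\<dots> = ennreal (K * (b - a))" using K0 that by (simp add: ennreal_mult)
    finally show ?thesis .
  qed
  have Ifin: "I a b < \<infinity>" if "a \<le> b" for a b
    using Ibnd[OF that] by (simp add: le_less_trans)
  have Iadd: "I a c = I a b + I b c" if "a \<le> b" "b \<le> c" for a b c
  proof -
    have "I a c = (\<integral>\<^sup>+v. ennreal (indicator {a<..b} v * p v) + ennreal (indicator {b<..c} v * p v) \<partial>lborel)"
      unfolding I_def using that
      by (intro nn_integral_cong) (auto simp: indicator_def pnn ennreal_plus[symmetric] simp del: ennreal_plus)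
    also have "\<dots> = I a b + I b c"
      unfolding I_def by (intro nn_integral_add) auto
    finally show ?thesis .
  qed
  define F where "F t = enn2real (I s t)" for t
  have Fsplit: "F t = F v + enn2real (I v t)" if "s \<le> v" "v \<le> t" for v t
  proof -
    have "I s t = I s v + I v t" using Iadd[OF that] .
    moreover have "I s v < top" "I v t < top" using Ifin that by auto
    ultimately show ?thesis unfolding F_def by (simp add: enn2real_plus)
  qed
  have Fmono: "F v \<le> F t" if "s \<le> v" "v \<le> t" for v t
    using Fsplit[OF that] by (simp add: enn2real_nonneg)
  have Flip: "F t \<le> F v + K * (t - v)" if "s \<le> v" "v \<le> t" for v t
  proof -
    have "enn2real (I v t) \<le> K * (t - v)"
      using Ibnd[OF that(2)] K0 that by (simp add: enn2real_leI)
    then show ?thesis using Fsplit[OF that] by linarith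
  qed
  have Fs: "F s = 0" unfolding F_def I_def by simp
  have FT: "F T = 0" if T: "T > s" for T
  proof (rule ccontr)
    assume nz: "F T \<noteq> 0"
    define S' where "S' = {v. s \<le> v \<and> v \<le> T \<and> F v = F T}"
    define u where "u = Inf S'"
    have TS': "T \<in> S'" using T by (auto simp: S'_def)
    have bS': "bdd_below S'" by (auto simp: S'_def bdd_below_def)
    have su: "s \<le> u" unfolding u_def using TS' by (intro cInf_greatest) (auto simp: S'_def)
    have uT: "u \<le> T" unfolding u_def using TS' bS' by (intro cInf_lower)
    have Fu: "F u = F T"
    proof -
      have "F T \<le> F u + K * e" if e: "e > 0" for e
      proof -
        from cInf_lessD[of S' "u + e"] TS' e obtain v where v: "v \<in> S'" "v < u + e"
          unfolding u_def by auto
        have uv: "u \<le> v" unfolding u_def using v bS' by (intro cInf_lower)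
        have "F T = F v" using v by (auto simp: S'_def)
        also have "\<dots> \<le> F u + K * (v - u)" using Flip[OF su uv] .
        also have "\<dots> \<le> F u + K * e" using K0 v by (intro add_left_mono mult_left_mono) auto
        finally show ?thesis .
      qed
      then have "F T \<le> F u"
      proof (cases "K = 0")
        case True then show ?thesis using \<open>\<And>e. e > 0 \<Longrightarrow> F T \<le> F u + K * e\<close>[of 1] by simp
      next
        case False
        show ?thesis
        proof (rule field_le_epsilon)
          fix e :: real assume "e > 0"
          then show "F T \<le> F u + e"
            using \<open>\<And>e. e > 0 \<Longrightarrow> F T \<le> F u + K * e\<close>[of "e / K"] K0 False by simp
        qed
      qed
      moreover have "F u \<le> F T" using Fmono[OF su uT] .
      ultimately show ?thesis by simp
    qed
    have us: "s < u" using Fu Fs nz su by (cases "s = u") auto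
    have "u \<in> S"
      unfolding S
    proof (intro CollectI allI impI)
      fix e :: real assume e: "e > 0"
      define v where "v = max (u - e) s"
      have sv: "s \<le> v" and vu: "v < u" and vT: "v \<le> T" using e us uT by (auto simp: v_def)
      have "v \<notin> S'"
      proof
        assume "v \<in> S'" then have "u \<le> v" unfolding u_def using bS' by (intro cInf_lower)
        then show False using vu by simp
      qed
      then have "F v \<noteq> F T" using sv vT by (auto simp: S'_def)
      then have "F v < F u" using Fmono[OF sv] vu Fu by (metis less_eq_real_def)
      moreover have "F u = F v + enn2real (I v u)" using Fsplit[OF sv, of u] vu by simp
      ultimately have "enn2real (I v u) > 0" by linarith
      then have "I v u > 0" by (metis enn2real_eq_0_iff not_gr_zero order_less_irrefl)
      also have "I v u \<le> (\<integral>\<^sup>+w. ennreal (indicator {u-e..u} w * p w) \<partial>lborel)"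
        unfolding I_def by (intro nn_integral_mono) (auto simp: indicator_def v_def pnn)
      finally show "(\<integral>\<^sup>+w. ennreal (indicator {u-e..u} w * p w) \<partial>lborel) > 0" .
    qed
    then have "u \<le> s" unfolding s_def using bdd by (intro cSup_upper)
    then show False using us by simp
  qed
  have h: "AE v in lborel. indicator {s<..s + real n + 1} v * p v = 0" for n
  proof -
    have "I s (s + real n + 1) = 0"
      using FT[of "s + real n + 1"] Ifin[of s "s + real n + 1"] unfolding F_def
      by (auto simp add: enn2real_eq_0_iff)
    then show ?thesis unfolding I_def
      by (subst (asm) nn_integral_0_iff_AE) (auto simp: pnn)
  qed
  have "AE v in lborel. \<forall>n. indicator {s<..s + real n + 1} v * p v = 0"
    unfolding AE_all_countable using h by blast
  then show ?thesis
  proof (rule AE_mp, intro AE_I2 impI allI)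
    fix v assume H: "\<forall>n. indicator {s<..s + real n + 1} v * p v = 0" and sv: "Sup S < v"
    obtain n :: nat where "v - s \<le> real n" using real_arch_simple by blast
    then show "p v = 0" using H[rule_format, of n] sv unfolding s_def by (auto simp: indicator_def)
  qed
qed

lemma gamma_scaled_nn:
  fixes s b :: real assumes s: "s > 0" and b: "b > -1"
  shows "(\<integral>\<^sup>+t. ennreal (indicator {0<..} t * (t powr b * exp (-t/s))) \<partial>lborel)
           = ennreal (s powr (b+1) * Gamma (b+1))"
proof -
  define H where "H t = ennreal (indicator {0<..} t * (t powr b * exp (-t/s)))" for t
  have [measurable]: "H \<in> borel_measurable borel" unfolding H_def by measurable
  have "(\<integral>\<^sup>+t. H t \<partial>lborel) = ennreal \<bar>s\<bar> * (\<integral>\<^sup>+x. H (0 + s * x) \<partial>lborel)"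
    by (rule nn_integral_real_affine) (use s in auto)
  also have "(\<integral>\<^sup>+x. H (0 + s * x) \<partial>lborel)
      = (\<integral>\<^sup>+x. ennreal (s powr b) * ennreal (indicator {0..} x * x powr (b + 1 - 1) / exp x) \<partial>lborel)"
  proof (intro nn_integral_cong)
    fix x :: real
    show "H (0 + s * x) = ennreal (s powr b) * ennreal (indicator {0..} x * x powr (b + 1 - 1) / exp x)"
    proof (cases "x > 0")
      case True
      then have "H (0 + s * x) = ennreal (s powr b * (x powr b / exp x))"
        using s by (simp add: H_def powr_mult exp_minus field_simps)
      then show ?thesis using True s by (simp add: ennreal_mult[symmetric] mult.assoc)
    next
      case False
      then show ?thesis using s by (auto simp: H_def indicator_def zero_less_mult_iff)
    qed
  qed
  also have "\<dots> = ennreal (s powr b) * ennreal (Gamma (b + 1))"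
    using b by (subst nn_integral_cmult) (auto simp: Gamma_conv_nn_integral_real)
  finally show ?thesis
    unfolding H_def using s b by (simp add: ennreal_mult[symmetric] powr_add mult_ac Gamma_real_pos)
qed



lemma main_conv:
  fixes p :: "real \<Rightarrow> real" and s a b K :: real and A :: "real set"
  assumes pm[measurable]: "p \<in> borel_measurable borel" and pnn: "\<And>u. p u \<ge> 0" and pK: "\<And>u. p u \<le> K"
    and pneg: "\<And>u. u < 0 \<Longrightarrow> p u = 0"
    and s: "s > 0" and a: "a > 0" and b: "b > -1"
    and asym: "p \<sim>[at_left s] (\<lambda>u. a * (s - u) powr b)"
    and A[measurable]: "A \<in> sets borel"
  shows "(\<lambda>n. \<integral>t. indicator A t * (indicator {0<..} t * (real n powr b * ((s - t/n)/s)^n * p (s - t/n))) \<partial>lborel)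
          \<longlonglongrightarrow> (\<integral>t. indicator A t * (indicator {0<..} t * (a * (t powr b * exp (-t/s)))) \<partial>lborel)"
    and "integrable lborel (\<lambda>t. indicator A t * (indicator {0<..} t * (real n powr b * ((s - t/n)/s)^n * p (s - t/n))))"
    and "integrable lborel (\<lambda>t. indicator A t * (indicator {0<..} t * (a * (t powr b * exp (-t/s)))))"
proof -
  define F where "F n t = indicator {0<..} t * (real n powr b * ((s - t/n)/s)^n * p (s - t/n))" for n :: nat and t :: real
  define G where "G t = indicator {0<..} t * (a * (t powr b * exp (-t/s)))" for t :: real
  have K0: "K \<ge> 0" using pnn[of 0] pK[of 0] by linarith
  obtain b0 where b0: "b0 < s" and b0': "\<And>y. b0 < y \<Longrightarrow> y < s \<Longrightarrow> norm (p y) \<le> 2 * norm (a * (s - y) powr b)"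
    using asymp_equiv_imp_eventually_le[OF asym, of 2] unfolding eventually_at_left_field by auto
  define \<delta> where "\<delta> = s - b0"
  have \<delta>: "\<delta> > 0" using b0 by (simp add: \<delta>_def)
  define C where "C = 2 * a + K / \<delta> powr b + K / s powr b"
  have C0: "C \<ge> 0" using a K0 by (simp add: C_def)
  define H where "H t = indicator {0<..} t * (t powr b * exp (-t/s))" for t :: real
  have [measurable]: "H \<in> borel_measurable borel" unfolding H_def by measurable
  have H0: "H t \<ge> 0" for t by (simp add: H_def)
  have intH: "integrable lborel H"
    by (rule integrableI_nn_integral_finite[where x="s powr (b+1) * Gamma (b+1)"])
       (use gamma_scaled_nn[OF s b] H0 in \<open>auto simp: H_def\<close>)
  have bound: "\<bar>F n t\<bar> \<le> C * H t" for n t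
  proof (cases "t > 0 \<and> n > 0 \<and> s - t/n \<ge> 0")
    case False
    then have "F n t = 0" using pneg[of "s - t/n"] by (auto simp: F_def)
    then show ?thesis using C0 H0 by simp
  next
    case True
    then have t: "t > 0" and n: "real n \<ge> 1" and u0: "s - t/n \<ge> 0" by auto
    define q where "q = (s - t/n)/s"
    have q0: "q \<ge> 0" using u0 s by (simp add: q_def)
    have "q = 1 + (- t / (s * n))" using s n by (simp add: q_def field_simps)
    then have "q \<le> exp (- t / (s * n))" using exp_ge_add_one_self by metis
    then have "q ^ n \<le> exp (- t / (s * n)) ^ n" using q0 by (intro power_mono) auto
    also have "\<dots> = exp (real n * (- t / (s * n)))" by (rule exp_of_nat_mult[symmetric])
    also have "\<dots> = exp (- t / s)" using n by simp
    finally have qn: "q ^ n \<le> exp (- t / s)" .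
    have np: "real n powr b * p (s - t/n) \<le> C * t powr b"
    proof (cases "t / n < \<delta>")
      case True
      then have "b0 < s - t/n" "s - t/n < s" using t n by (auto simp: \<delta>_def)
      then have "p (s - t/n) \<le> 2 * (a * (t/n) powr b)"
        using b0'[of "s - t/n"] pnn a by simp
      then have "real n powr b * p (s - t/n) \<le> real n powr b * (2 * (a * (t/n) powr b))"
        by (intro mult_left_mono) auto
      also have "\<dots> = 2 * a * t powr b" using n t by (simp add: powr_divide)
      also have "\<dots> \<le> C * t powr b" using K0 \<delta> s by (intro mult_right_mono) (auto simp: C_def)
      finally show ?thesis .
    next
      case False
      have nb: "real n powr b \<le> t powr b / \<delta> powr b + t powr b / s powr b"
      proof (cases "b \<ge> 0")
        case True
        have "real n \<le> t / \<delta>" using False \<delta> n by (simp add: field_simps)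
        then have "real n powr b \<le> (t/\<delta>) powr b" using True by (intro powr_mono2) auto
        moreover have "t powr b / s powr b \<ge> 0" by simp
        moreover have "(t/\<delta>) powr b = t powr b / \<delta> powr b" using t \<delta> by (simp add: powr_divide)
        ultimately show ?thesis by linarith
      next
        case False
        have "t / s \<le> real n" using u0 s n by (simp add: field_simps)
        then have "real n powr b \<le> (t/s) powr b" using False t s by (intro powr_mono2') auto
        moreover have "t powr b / \<delta> powr b \<ge> 0" by simp
        moreover have "(t/s) powr b = t powr b / s powr b" using t s by (simp add: powr_divide)
        ultimately show ?thesis by linarith
      qed
      have "real n powr b * p (s - t/n) \<le> (t powr b / \<delta> powr b + t powr b / s powr b) * K"
        using nb pnn pK by (intro mult_mono) auto
      also have "\<dots> = (K / \<delta> powr b + K / s powr b) * t powr b" by (simp add: field_simps)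
      also have "\<dots> \<le> C * t powr b" using a by (intro mult_right_mono) (auto simp: C_def)
      finally show ?thesis .
    qed
    have "\<bar>F n t\<bar> = q ^ n * (real n powr b * p (s - t/n))"
      using t q0 pnn by (simp add: F_def q_def abs_mult)
    also have "\<dots> \<le> exp (- t / s) * (C * t powr b)"
      by (rule mult_mono[OF qn np]) (use pnn in auto)
    also have "\<dots> = C * H t" using t by (simp add: H_def)
    finally show ?thesis .
  qed
  have lim: "(\<lambda>n. F n t) \<longlonglongrightarrow> G t" for t
  proof (cases "t > 0")
    case False then show ?thesis by (simp add: F_def G_def)
  next
    case t: True
    define r where "r u = p u / (a * (s - u) powr b)" for u
    have r1: "(r \<longlongrightarrow> 1) (at_left s)"
      unfolding r_def using a
      by (intro asymp_equivD_strong[OF asym]) (auto simp: eventually_at_left_field intro!: exI[of _ "s - 1"])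
    have fl: "filterlim (\<lambda>n::nat. s - t / real n) (at_left s) sequentially"
    proof (rule tendsto_imp_filterlim_at_left)
      show "(\<lambda>n::nat. s - t / real n) \<longlonglongrightarrow> s"
        using tendsto_diff[OF tendsto_const lim_const_over_n[of t]] by simp
      show "\<forall>\<^sub>F n in sequentially. s - t / real n < s"
        using t by (auto simp: eventually_sequentially intro!: exI[of _ 1])
    qed
    have rlim: "(\<lambda>n. r (s - t / real n)) \<longlonglongrightarrow> 1" using filterlim_compose[OF r1 fl] .
    have elim: "(\<lambda>n. (1 + (- t / s) / real n) ^ n) \<longlonglongrightarrow> exp (- t / s)"
      by (rule tendsto_exp_limit_sequentially)
    have "(\<lambda>n. a * t powr b * ((1 + (- t / s) / real n) ^ n * r (s - t / real n)))
            \<longlonglongrightarrow> a * t powr b * (exp (- t / s) * 1)"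
      by (intro tendsto_intros elim rlim)
    moreover have "\<forall>\<^sub>F n in sequentially. a * t powr b * ((1 + (- t / s) / real n) ^ n * r (s - t / real n)) = F n t"
      unfolding eventually_sequentially
    proof (intro exI[of _ 1] allI impI)
      fix n :: nat assume "n \<ge> 1"
      then have n: "real n > 0" by simp
      have "(1 + (- t / s) / real n) = (s - t/n)/s" using s n by (simp add: field_simps)
      moreover have "r (s - t / real n) = p (s - t/n) * real n powr b / (a * t powr b)"
        using n t a by (simp add: r_def powr_divide)
      ultimately show "a * t powr b * ((1 + (- t / s) / real n) ^ n * r (s - t / real n)) = F n t"
        using t a by (simp add: F_def)
    qed
    ultimately have "(\<lambda>n. F n t) \<longlonglongrightarrow> a * t powr b * (exp (- t / s) * 1)"
      by (rule Lim_transform_eventually)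
    then show ?thesis using t by (simp add: G_def mult_ac)
  qed
  have m1: "(\<lambda>t. indicator A t * G t) \<in> borel_measurable lborel" unfolding G_def by measurable
  have m2: "\<And>n. (\<lambda>t. indicator A t * F n t) \<in> borel_measurable lborel" unfolding F_def by measurable
  have m3: "integrable lborel (\<lambda>t. C * H t)" using intH by simp
  have m4: "AE t in lborel. (\<lambda>n. indicator A t * F n t) \<longlonglongrightarrow> indicator A t * G t"
    using lim by (intro AE_I2 tendsto_intros)
  have m5: "\<And>n. AE t in lborel. norm (indicator A t * F n t) \<le> C * H t"
    using bound C0 H0 by (intro AE_I2) (auto simp: indicator_def abs_mult)
  show "(\<lambda>n. \<integral>t. indicator A t * (indicator {0<..} t * (real n powr b * ((s - t/n)/s)^n * p (s - t/n))) \<partial>lborel)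
          \<longlonglongrightarrow> (\<integral>t. indicator A t * (indicator {0<..} t * (a * (t powr b * exp (-t/s)))) \<partial>lborel)"
    using integral_dominated_convergence[OF m1 m2 m3 m4 m5] unfolding F_def G_def .
  show "integrable lborel (\<lambda>t. indicator A t * (indicator {0<..} t * (real n powr b * ((s - t/n)/s)^n * p (s - t/n))))"
    using integrable_dominated_convergence2[OF m1 m2 m3 m4 m5] unfolding F_def G_def .
  show "integrable lborel (\<lambda>t. indicator A t * (indicator {0<..} t * (a * (t powr b * exp (-t/s)))))"
    using integrable_dominated_convergence[OF m1 m2 m3 m4 m5] unfolding F_def G_def .
qed

theorem theorem2:
  fixes \<psi> :: "real \<Rightarrow> real" and a b :: real
    and M :: "nat \<Rightarrow> 'a measure" and U :: "nat \<Rightarrow> 'a \<Rightarrow> real"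
  assumes meas: "set_borel_measurable borel {0..} \<psi>"
    and nonneg: "\<And>u. u \<ge> 0 \<Longrightarrow> \<psi> u \<ge> 0"
    and moments: "\<And>d. d \<ge> 1 \<Longrightarrow> 0 < psi_moment \<psi> d \<and> psi_moment \<psi> d < \<infinity>"
    and law: "\<And>d. d \<ge> 1 \<Longrightarrow> prob_space (M d) \<and> distributed (M d) lborel (U d) (\<lambda>u. ennreal (U_density \<psi> d u))"
    and ustar_fin: "bdd_above (ustar_set \<psi>)"
    and bounded: "bounded (\<psi> ` {0..})"
    and a_pos: "a > 0" and b_gt: "b > -1"
    and asym: "\<psi> \<sim>[at_left (ustar \<psi>)] (\<lambda>u. a * (ustar \<psi> - u) powr b)"
  shows "weak_conv_m (\<lambda>d. distr (M d) borel (\<lambda>\<omega>. real d * (ustar \<psi> - U d \<omega>)))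
           (gamma_measure (b + 1) (1 / ustar \<psi>))"
proof -
  define s where "s = ustar \<psi>"
  define p where "p u = indicator {0..} u * \<psi> u" for u
  have pm[measurable]: "p \<in> borel_measurable borel"
    using meas unfolding set_borel_measurable_def p_def by simp
  have pnn: "p u \<ge> 0" for u by (auto simp: p_def indicator_def nonneg)
  have pneg: "p u = 0" if "u < 0" for u using that by (simp add: p_def)
  obtain K where K: "\<And>x. x \<in> \<psi> ` {0..} \<Longrightarrow> \<bar>x\<bar> \<le> K" using bounded unfolding bounded_real by blast
  have pK: "p u \<le> K" for u
  proof (cases "u \<ge> 0")
    case True then show ?thesis using K[of "\<psi> u"] by (auto simp: p_def)
  next
    case False then show ?thesis using K[of "\<psi> 0"] by (auto simp: p_def)
  qed
  have set_eq: "ustar_set \<psi> = {u. \<forall>\<epsilon>>0. (\<integral>\<^sup>+v. ennreal (indicator {u-\<epsilon>..u} v * p v) \<partial>lborel) > 0}"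
  proof -
    have "indicator ({u-e..u} \<inter> {0..}) v * \<psi> v = indicator {u-e..u} v * p v" for u e v :: real
      by (auto simp: indicator_def p_def)
    then show ?thesis unfolding ustar_set_def by (simp only:)
  qed
  have zero: "AE u in lborel. s < u \<longrightarrow> p u = 0"
    using zero_beyond[OF pm pnn pK set_eq ustar_fin] unfolding s_def ustar_def .
  have Qtot: "psi_moment \<psi> d = (\<integral>\<^sup>+u. ennreal (indicator UNIV ((s-u)*d) * (u^d * p u)) \<partial>lborel)" for d
    unfolding psi_moment_def p_def by (simp add: mult_ac)
  have s_pos: "s > 0"
  proof (rule ccontr)
    assume ns: "\<not> s > 0"
    have up: "u * p u = 0" if "u \<le> 0" for u
      using that pneg[of u] by (cases "u < 0") auto
    have "AE u in lborel. ennreal (indicator UNIV ((s-u)*1) * (u^1 * p u)) = 0"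
      using zero
    proof eventually_elim
      case (elim u)
      have "u * p u = 0"
      proof (cases "s < u")
        case True then show ?thesis using elim by simp
      next
        case False then show ?thesis using ns up by simp
      qed
      then show ?case by (simp only: power_one_right mult_1_right ennreal_0 mult_1_left indicator_UNIV)
    qed
    then have "psi_moment \<psi> 1 = 0" unfolding Qtot by (simp add: nn_integral_cong_AE)
    then show False using moments[of 1] by simp
  qed
  have asym': "p \<sim>[at_left s] (\<lambda>u. a * (s - u) powr b)"
  proof (rule asymp_equiv_transfer[OF asym[folded s_def]])
    show "\<forall>\<^sub>F x in at_left s. \<psi> x = p x"
      unfolding eventually_at_left_field using s_pos by (auto simp: p_def intro!: exI[of _ 0])
  qed auto
  define F where "F n t = indicator {0<..} t * (real n powr b * ((s - t/n)/s)^n * p (s - t/n))" for n :: nat and t :: real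
  define G where "G t = indicator {0<..} t * (a * (t powr b * exp (-t/s)))" for t :: real
  have conv: "(\<lambda>n. \<integral>t. indicator A t * F n t \<partial>lborel) \<longlonglongrightarrow> (\<integral>t. indicator A t * G t \<partial>lborel)"
    and intF: "integrable lborel (\<lambda>t. indicator A t * F n t)"
    and intG: "integrable lborel (\<lambda>t. indicator A t * G t)"
    if "A \<in> sets borel" for A n
    using main_conv[OF pm pnn pK pneg s_pos a_pos b_gt asym' that] unfolding F_def G_def by auto
  have Fnn: "F n t \<ge> 0" for n t
  proof (cases "s - t/n < 0")
    case True then show ?thesis by (simp add: F_def pneg)
  next
    case False then show ?thesis using s_pos pnn by (simp add: F_def)
  qed
  have sub: "ennreal (real d powr (1+b) / s^d) * (\<integral>\<^sup>+u. ennreal (indicator B ((s-u)*d) * (u^d * p u)) \<partial>lborel)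
      = ennreal (\<integral>t. indicator B t * F d t \<partial>lborel)" if d: "d \<ge> 1" and B[measurable]: "B \<in> sets borel" for d B
  proof -
    have dpos: "real d > 0" using d by simp
    have "(\<integral>\<^sup>+u. ennreal (indicator B ((s-u)*d) * (u^d * p u)) \<partial>lborel)
        = (\<integral>\<^sup>+u. ennreal (indicator B ((s-u)*d) * indicator {..<s} u * (u^d * p u)) \<partial>lborel)"
      apply (rule nn_integral_cong_AE)
      using zero AE_lborel_singleton[of s] by eventually_elim (auto simp: indicator_def)
    also have "\<dots> = ennreal \<bar>-1/real d\<bar> * (\<integral>\<^sup>+t. ennreal (indicator B ((s-(s + (-1/real d) * t))*d)
          * indicator {..<s} (s + (-1/real d) * t) * ((s + (-1/real d) * t)^d * p (s + (-1/real d) * t))) \<partial>lborel)"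
      by (rule nn_integral_real_affine) (use dpos in auto)
    also have "(\<integral>\<^sup>+t. ennreal (indicator B ((s-(s + (-1/real d) * t))*d)
          * indicator {..<s} (s + (-1/real d) * t) * ((s + (-1/real d) * t)^d * p (s + (-1/real d) * t))) \<partial>lborel)
        = (\<integral>\<^sup>+t. ennreal (indicator B t * indicator {0<..} t * ((s - t/d)^d * p (s - t/d))) \<partial>lborel)"
      using dpos by (intro nn_integral_cong) (auto simp: indicator_def field_simps)
    finally have eq1: "(\<integral>\<^sup>+u. ennreal (indicator B ((s-u)*d) * (u^d * p u)) \<partial>lborel)
        = ennreal (1/real d) * (\<integral>\<^sup>+t. ennreal (indicator B t * indicator {0<..} t * ((s - t/d)^d * p (s - t/d))) \<partial>lborel)"
      using dpos by simp
    have kap: "real d powr (1+b) / s^d * (1/real d) = real d powr b / s^d"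
      using dpos by (simp add: powr_add)
    have "ennreal (real d powr (1+b) / s^d) * (\<integral>\<^sup>+u. ennreal (indicator B ((s-u)*d) * (u^d * p u)) \<partial>lborel)
        = ennreal (real d powr b / s^d) * (\<integral>\<^sup>+t. ennreal (indicator B t * indicator {0<..} t * ((s - t/d)^d * p (s - t/d))) \<partial>lborel)"
    proof -
      have kk: "ennreal (real d powr (1+b) / s^d) * ennreal (1/real d) = ennreal (real d powr b / s^d)"
        by (subst ennreal_mult[symmetric]) (use dpos s_pos kap in auto)
      show ?thesis by (simp only: eq1 kk[symmetric] mult.assoc)
    qed
    also have "\<dots> = (\<integral>\<^sup>+t. ennreal (real d powr b / s^d) * ennreal (indicator B t * indicator {0<..} t * ((s - t/d)^d * p (s - t/d))) \<partial>lborel)"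
      by (rule nn_integral_cmult[symmetric]) measurable
    also have "\<dots> = (\<integral>\<^sup>+t. ennreal (indicator B t * F d t) \<partial>lborel)"
    proof (intro nn_integral_cong)
      fix t
      have eq': "real d powr b / s^d * (indicator B t * indicator {0<..} t * ((s - t/d)^d * p (s - t/d)))
          = indicator B t * F d t"
        using s_pos by (simp add: F_def power_divide field_simps)
      have nn: "0 \<le> indicator B t * indicator {0<..} t * ((s - t/d)^d * p (s - t/d))"
      proof (cases "s - t/d < 0")
        case True then show ?thesis by (simp add: pneg)
      next
        case False then show ?thesis using pnn by simp
      qed
      have k0: "0 \<le> real d powr b / s^d" using s_pos by simp
      show "ennreal (real d powr b / s^d) * ennreal (indicator B t * indicator {0<..} t * ((s - t/d)^d * p (s - t/d)))
          = ennreal (indicator B t * F d t)"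
        by (metis ennreal_mult[OF k0 nn] eq')
    qed
    also have "\<dots> = ennreal (\<integral>t. indicator B t * F d t \<partial>lborel)"
      by (rule nn_integral_eq_integral[OF intF[OF B]]) (use Fnn in \<open>auto intro!: AE_I2\<close>)
    finally show ?thesis .
  qed
  define R where "R B = (\<integral>t. indicator B t * G t \<partial>lborel)" for B
  define Rn where "Rn n B = (\<integral>t. indicator B t * F n t \<partial>lborel)" for n B
  have RU: "R UNIV = a * (s powr (b+1) * Gamma (b+1))"
  proof -
    have e: "(\<lambda>t. indicator UNIV t * G t) = (\<lambda>t. a * (indicator {0<..} t * (t powr b * exp (-t/s))))"
      by (auto simp: G_def indicator_def fun_eq_iff)
    have "(\<integral>t. indicator {0<..} t * (t powr b * exp (-t/s)) \<partial>lborel)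
        = enn2real (\<integral>\<^sup>+t. ennreal (indicator {0<..} t * (t powr b * exp (-t/s))) \<partial>lborel)"
      by (rule integral_eq_nn_integral) (auto intro!: AE_I2)
    also have "\<dots> = s powr (b+1) * Gamma (b+1)"
      unfolding gamma_scaled_nn[OF s_pos b_gt] using b_gt by (simp add: Gamma_real_pos less_imp_le)
    finally show ?thesis unfolding R_def e by simp
  qed
  have Gnn: "G t \<ge> 0" for t using a_pos by (simp add: G_def)
  have RUpos: "R UNIV > 0" unfolding RU using a_pos s_pos b_gt by (simp add: Gamma_real_pos)
  have cdfeq: "cdf (distr (M d) borel (\<lambda>\<omega>. real d * (s - U d \<omega>))) x = Rn d {..x} / Rn d UNIV"
    if d: "d \<ge> 1" for d x
  proof -
    have dpos: "real d > 0" using d by simp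
    have dist: "distributed (M d) lborel (U d) (\<lambda>u. ennreal (U_density \<psi> d u))" using law[OF d] by simp
    have Um[measurable]: "U d \<in> measurable (M d) borel" using dist by (simp add: distributed_def)
    define A where "A = {u. (s-u)*real d \<le> x}"
    have A[measurable]: "A \<in> sets borel" unfolding A_def by measurable
    define Q where "Q B = (\<integral>\<^sup>+u. ennreal (indicator B ((s-u)*d) * (u^d * p u)) \<partial>lborel)" for B :: "real set"
    define c where "c = c_const \<psi> d"
    have c0: "c \<ge> 0" by (simp add: c_def c_const_def)
    have "cdf (distr (M d) borel (\<lambda>\<omega>. real d * (s - U d \<omega>))) x
        = measure (M d) ((\<lambda>\<omega>. real d * (s - U d \<omega>)) -` {..x} \<inter> space (M d))"
      unfolding cdf_def by (rule measure_distr) auto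
    also have "(\<lambda>\<omega>. real d * (s - U d \<omega>)) -` {..x} \<inter> space (M d) = U d -` A \<inter> space (M d)"
      by (auto simp: A_def mult.commute)
    also have "measure (M d) (U d -` A \<inter> space (M d))
        = enn2real (\<integral>\<^sup>+u. ennreal (U_density \<psi> d u) * indicator A u \<partial>lborel)"
      unfolding measure_def using distributed_emeasure[OF dist, of A] A by simp
    also have "(\<integral>\<^sup>+u. ennreal (U_density \<psi> d u) * indicator A u \<partial>lborel)
        = (\<integral>\<^sup>+u. ennreal c * ennreal (indicator {..x} ((s-u)*d) * (u^d * p u)) \<partial>lborel)"
    proof (intro nn_integral_cong)
      fix u :: real
      have nn: "0 \<le> indicator {..x} ((s-u)*d) * (u^d * p u)"
      proof (cases "u < 0")
        case True then show ?thesis by (simp add: pneg)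
      next
        case False then show ?thesis using pnn by simp
      qed
      have "U_density \<psi> d u * indicator A u = c * (indicator {..x} ((s-u)*d) * (u^d * p u))"
        by (auto simp: U_density_def A_def p_def c_def indicator_def)
      then have "ennreal (U_density \<psi> d u * indicator A u) = ennreal c * ennreal (indicator {..x} ((s-u)*d) * (u^d * p u))"
        using ennreal_mult[OF c0 nn] by simp
      then show "ennreal (U_density \<psi> d u) * indicator A u = ennreal c * ennreal (indicator {..x} ((s-u)*d) * (u^d * p u))"
        by (auto simp: indicator_def)
    qed
    also have "\<dots> = ennreal c * Q {..x}"
      unfolding Q_def by (rule nn_integral_cmult) measurable
    finally have e1: "cdf (distr (M d) borel (\<lambda>\<omega>. real d * (s - U d \<omega>))) x = c * enn2real (Q {..x})"
      using c0 by (simp add: enn2real_mult)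
    have cQ: "c = 1 / enn2real (Q UNIV)" unfolding c_def c_const_def Qtot Q_def ..
    define \<kappa> where "\<kappa> = real d powr (1+b) / s^d"
    have \<kappa>: "\<kappa> > 0" using dpos s_pos by (simp add: \<kappa>_def)
    have QR: "\<kappa> * enn2real (Q B) = Rn d B" if "B \<in> sets borel" for B
    proof -
      have "enn2real (ennreal \<kappa> * Q B) = enn2real (ennreal (Rn d B))"
        using sub[OF d that] unfolding Q_def Rn_def \<kappa>_def by simp
      moreover have "Rn d B \<ge> 0" unfolding Rn_def by (rule Bochner_Integration.integral_nonneg) (simp add: Fnn)
      ultimately show ?thesis using \<kappa> by (simp add: enn2real_mult)
    qed
    have q1: "enn2real (Q {..x}) = Rn d {..x} / \<kappa>" using QR[of "{..x}"] \<kappa> by (simp add: field_simps)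
    have q2: "enn2real (Q UNIV) = Rn d UNIV / \<kappa>" using QR[of UNIV] \<kappa> by (simp add: field_simps)
    show ?thesis unfolding e1 cQ q1 q2 using \<kappa> by (cases "Rn d UNIV = 0") (simp_all add: field_simps)
  qed
  have gcdf: "cdf (gamma_measure (b + 1) (1 / s)) x = R {..x} / R UNIV" for x
  proof -
    define c0 where "c0 = (1/s) powr (b+1) / Gamma (b+1) / a"
    have c00: "c0 \<ge> 0" using s_pos a_pos b_gt by (simp add: c0_def Gamma_real_pos less_imp_le)
    have gm[measurable]: "(\<lambda>t. ennreal (gamma_density (b + 1) (1 / s) t)) \<in> borel_measurable borel"
      unfolding gamma_density_def by measurable
    have "cdf (gamma_measure (b + 1) (1 / s)) x
        = enn2real (\<integral>\<^sup>+t. ennreal (gamma_density (b + 1) (1 / s) t) * indicator {..x} t \<partial>lborel)"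
      unfolding cdf_def gamma_measure_def measure_def by (subst emeasure_density) auto
    also have "(\<integral>\<^sup>+t. ennreal (gamma_density (b + 1) (1 / s) t) * indicator {..x} t \<partial>lborel)
        = (\<integral>\<^sup>+t. ennreal (c0 * (indicator {..x} t * G t)) \<partial>lborel)"
    proof (intro nn_integral_cong)
      fix t :: real
      have "gamma_density (b + 1) (1 / s) t * indicator {..x} t = c0 * (indicator {..x} t * G t)"
        using a_pos s_pos b_gt
        by (auto simp: gamma_density_def c0_def G_def indicator_def exp_minus field_simps)
      then show "ennreal (gamma_density (b + 1) (1 / s) t) * indicator {..x} t = ennreal (c0 * (indicator {..x} t * G t))"
        by (auto simp: indicator_def)
    qed
    also have "\<dots> = ennreal (\<integral>t. c0 * (indicator {..x} t * G t) \<partial>lborel)"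
      by (rule nn_integral_eq_integral) (use intG[of "{..x}"] c00 Gnn in \<open>auto intro!: AE_I2\<close>)
    finally have "cdf (gamma_measure (b + 1) (1 / s)) x = c0 * R {..x}"
      using c00 Gnn by (simp add: R_def Bochner_Integration.integral_nonneg)
    moreover have "c0 = 1 / R UNIV" unfolding RU c0_def using s_pos
      by (simp add: powr_divide field_simps)
    ultimately show ?thesis by simp
  qed
  show ?thesis
    unfolding weak_conv_m_def weak_conv_def s_def[symmetric]
  proof (intro allI impI)
    fix x :: real
    have "(\<lambda>d. Rn d {..x} / Rn d UNIV) \<longlonglongrightarrow> R {..x} / R UNIV"
      unfolding Rn_def R_def using RUpos unfolding R_def
      by (intro tendsto_divide conv) auto
    moreover have "\<forall>\<^sub>F d in sequentially. Rn d {..x} / Rn d UNIV = cdf (distr (M d) borel (\<lambda>\<omega>. real d * (s - U d \<omega>))) x"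
      unfolding eventually_sequentially using cdfeq by (intro exI[of _ 1]) auto
    ultimately have "(\<lambda>d. cdf (distr (M d) borel (\<lambda>\<omega>. real d * (s - U d \<omega>))) x) \<longlonglongrightarrow> R {..x} / R UNIV"
      by (rule Lim_transform_eventually)
    then show "(\<lambda>d. cdf (distr (M d) borel (\<lambda>\<omega>. real d * (s - U d \<omega>))) x) \<longlonglongrightarrow> cdf (gamma_measure (b + 1) (1 / s)) x"
      unfolding gcdf .
  qed
qed

end
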